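(* If a depth-proper mttr $M$ is finite-ML-nesting, then $M$ is LHI, i.e., there is $b\in\mathbb N$ with $H(M(t))\le b\cdot H(t)$ for all input trees $t$.
   Context: Trees: for a ranked alphabet $\Sigma$, $T_\Sigma$ is the set of finite ranked ordered trees over $\Sigma$, and $T_\Sigma(A)$ the trees over $\Sigma$ with additional rank-0 symbols from $A$. $X_k=\{x_1,\dots,x_k\}$ are input variables and $Y=\{y_1,y_2,\dots\}$, $Y_m=\{y_1,\dots,y_m\}$ are parameters. A (deterministic bottom-up) tree automaton $(P,\Sigma,h)$ has a finite state set $P$ and maps $h_\sigma:P^k\to P$ for $\sigma\in\Sigma^{(k)}$; $\hat h:T_\Sigma\to P$ is its run and $L_p=\{s\in T_\Sigma\mid \hat h(s)=p\}$. A (total, deterministic) macro tree transducer with look-ahead (mttr) is $M=(Q,P,\Sigma,\Delta,q_0,R,h)$ where $Q$ is a ranked alphabet of states, $\Sigma,\Delta$ are ranked input/output alphabets, $(P,\Sigma,h)$ is a tree automaton (the look-ahead), $q_0\in Q^{(0)}$, and for each $q\in Q^{(m)}$, $\sigma\in\Sigma^{(k)}$, $p_1,\dots,p_k\in P$ there is exactly one rule $\langle q,\sigma(x_1:p_1,\dots,x_k:p_k)\rangle(y_1,\dots,y_m)\to t$ with $t\in T_{\Delta\cup\langle Q,X_k\rangle}(Y_m)$, where $\langle q',x_i\rangle$ has the rank of $q'$. For $q\in Q^{(m)}$ and $s=\sigma(s_1,\dots,s_k)$, $M_q(s)\in T_\Delta(Y_m)$ is obtained from the right-hand side of the rule for $(q,\sigma,\hat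 h(s_1),\dots,\hat h(s_k))$ by replacing (recursively, innermost first) each subtree $\langle q',x_i\rangle(\xi_1,\dots,\xi_n)$ by $M_{q'}(s_i)$ with each $y_j$ replaced by (the result for) $\xi_j$; $M(s)=M_{q_0}(s)$. Extension and reachability: $\hat M$ is the mttr with input alphabet $\Sigma\cup P$ (each $p\in P$ a rank-0 input symbol with $\hat h_p()=p$), output alphabet $\Delta\cup\langle Q,P\rangle$ (where $\langle q,p\rangle$ has the rank of $q$), the rules of $M$ plus the rules $\langle q,p\rangle(y_1,\dots,y_m)\to\langle q,p\rangle(y_1,\dots,y_m)$ for $q\in Q^{(m)}$, $p\in P$. A pair $\langle q,p\rangle$ is reachable if it occurs in $\hat M(s)$ for some $s\in T_\Sigma(P)$. Depth-proper: for $y\in Y$ and $s\in T_\Delta(Y)$, $\lfloor s\rfloor_y$ is obtained from $s$ by replacing every maximal subtree not containing $y$ by a new rank-0 symbol $\$$. $M$ is depth-proper if for every reachable $\langle q,p\rangle$ with $q\in Q^{(m)}$ and every $y\in Y_m$, the set $\{\lfloor M_q(s)\rfloor_y\mid s\in L_p\}$ is infinite. Height: $H(t)$ is the number of nodes on a longest root-to-leaf path of $t$. ML-nesting: for $t\in T_\Sigma(P)$, the nesting of a root-to-leaf path of $\hat M(t)$ is the number of its nodes labeled by symbols of $\langle Q,P\rangle$. $M$ is finite-ML-nesting if there is $b\in\mathbb N$ such that for every $t\in T_\Sigma(P)$ (with any number of leaves labeled by symbols of $P$), every root-to-leaf path of $\hat M(t)$ has nesting at most $b$. *)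

theory Defs
  imports Main
begin

datatype 'a rtree = Node 'a "'a rtree list"

fun wf_tree :: "'a set \<Rightarrow> ('a \<Rightarrow> nat) \<Rightarrow> 'a rtree \<Rightarrow> bool" where
  "wf_tree A rk (Node a ts) = (a \<in> A \<and> length ts = rk a \<and> (\<forall>t\<in>set ts. wf_tree A rk t))"

fun height :: "'a rtree \<Rightarrow> nat" where
  "height (Node a ts) = Suc (Max (insert 0 (set (map height ts))))"

fun paths :: "'a rtree \<Rightarrow> 'a list set" where
  "paths (Node a ts) = (if ts = [] then {[a]} else (\<lambda>\<pi>. a # \<pi>) ` (\<Union>t\<in>set ts. paths t))"

text \<open>Labels of output trees of the extension: symbols of Delta, symbols <q,p> of <Q,P>,
  and parameters OY j standing for y_(j+1).\<close>
datatype ('d,'q,'p) olab = OD 'd | OS 'q 'p | OY nat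

text \<open>Labels of right-hand sides: output symbols, calls <q',x_(i+1)>, parameters y_(j+1).\<close>
datatype ('d,'q) rlab = RD 'd | RC 'q nat | RY nat

text \<open>Input trees of the extension are trees over Sigma \<union> P, labels Inl sigma / Inr p.\<close>

fun wf_rhs :: "'q set \<Rightarrow> ('q \<Rightarrow> nat) \<Rightarrow> 'd set \<Rightarrow> ('d \<Rightarrow> nat) \<Rightarrow> nat \<Rightarrow> nat
               \<Rightarrow> ('d,'q) rlab rtree \<Rightarrow> bool" where
  "wf_rhs Q rkQ D rkD k m (Node (RD d) ts) =
     (d \<in> D \<and> length ts = rkD d \<and> (\<forall>t\<in>set ts. wf_rhs Q rkQ D rkD k m t))"
| "wf_rhs Q rkQ D rkD k m (Node (RC q i) ts) =
     (q \<in> Q \<and> i < k \<and> length ts = rkQ q \<and> (\<forall>t\<in>set ts. wf_rhs Q rkQ D rkD k m t))"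
| "wf_rhs Q rkQ D rkD k m (Node (RY j) ts) = (j < m \<and> ts = [])"

text \<open>A total deterministic mttr (Q,P,Sigma,Delta,q0,R,h) with look-ahead automaton (P,Sigma,h).
  The rule for (q, sigma, p_1..p_k) has right-hand side R q sigma [p_1,..,p_k].
  Child x_(i+1) is referred to by index i, parameter y_(j+1) by index j.\<close>
definition is_mttr ::
  "'q set \<Rightarrow> ('q \<Rightarrow> nat) \<Rightarrow> 'p set \<Rightarrow> 's set \<Rightarrow> ('s \<Rightarrow> nat) \<Rightarrow> 'd set \<Rightarrow> ('d \<Rightarrow> nat)
   \<Rightarrow> 'q \<Rightarrow> ('q \<Rightarrow> 's \<Rightarrow> 'p list \<Rightarrow> ('d,'q) rlab rtree) \<Rightarrow> ('s \<Rightarrow> 'p list \<Rightarrow> 'p) \<Rightarrow> bool" where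
  "is_mttr Q rkQ P Sig rkS D rkD q0 R h \<longleftrightarrow>
     finite Q \<and> finite P \<and> finite Sig \<and> finite D \<and>
     q0 \<in> Q \<and> rkQ q0 = 0 \<and>
     (\<forall>\<sigma>\<in>Sig. \<forall>ps. set ps \<subseteq> P \<and> length ps = rkS \<sigma> \<longrightarrow> h \<sigma> ps \<in> P) \<and>
     (\<forall>q\<in>Q. \<forall>\<sigma>\<in>Sig. \<forall>ps. set ps \<subseteq> P \<and> length ps = rkS \<sigma> \<longrightarrow>
        wf_rhs Q rkQ D rkD (rkS \<sigma>) (rkQ q) (R q \<sigma> ps))"

fun run :: "('s \<Rightarrow> 'p list \<Rightarrow> 'p) \<Rightarrow> ('s + 'p) rtree \<Rightarrow> 'p" where
  "run h (Node (Inl \<sigma>) ts) = h \<sigma> (map (run h) ts)"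
| "run h (Node (Inr p) ts) = p"

text \<open>Second-order substitution of parameters: y_(j+1) := us ! j.\<close>
fun subst :: "('d,'q,'p) olab rtree \<Rightarrow> ('d,'q,'p) olab rtree list \<Rightarrow> ('d,'q,'p) olab rtree" where
  "subst (Node (OY j) ts) us = (if j < length us then us ! j else Node (OY j) (map (\<lambda>t. subst t us) ts))"
| "subst (Node a ts) us = Node a (map (\<lambda>t. subst t us) ts)"

text \<open>Instantiate a right-hand side, given the results f q' i = M_q'(s_(i+1)).\<close>
fun inst :: "('d,'q) rlab rtree \<Rightarrow> ('q \<Rightarrow> nat \<Rightarrow> ('d,'q,'p) olab rtree) \<Rightarrow> ('d,'q,'p) olab rtree" where
  "inst (Node (RD d) ts) f = Node (OD d) (map (\<lambda>t. inst t f) ts)"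
| "inst (Node (RY j) ts) f = Node (OY j) []"
| "inst (Node (RC q i) ts) f = subst (f q i) (map (\<lambda>t. inst t f) ts)"

text \<open>Semantics of the extension hat M: Mhat rkQ R h s q = hat M_q(s), for s in T_Sigma(P).
  Rules of M for input symbols of Sigma, and <q,p>(y_1..y_m) -> <q,p>(y_1..y_m) for p in P.\<close>
fun Mhat :: "('q \<Rightarrow> nat) \<Rightarrow> ('q \<Rightarrow> 's \<Rightarrow> 'p list \<Rightarrow> ('d,'q) rlab rtree) \<Rightarrow> ('s \<Rightarrow> 'p list \<Rightarrow> 'p)
             \<Rightarrow> ('s + 'p) rtree \<Rightarrow> 'q \<Rightarrow> ('d,'q,'p) olab rtree" where
  "Mhat rkQ R h (Node (Inl \<sigma>) ts) =
     (let rs = map (Mhat rkQ R h) ts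
      in (\<lambda>q. inst (R q \<sigma> (map (run h) ts)) (\<lambda>q' i. (rs ! i) q')))"
| "Mhat rkQ R h (Node (Inr p) ts) =
     (\<lambda>q. Node (OS q p) (map (\<lambda>j. Node (OY j) []) [0..<rkQ q]))"

text \<open>The mttr M itself on input trees over Sigma: M_q(s) (it uses only the rules of M).\<close>
definition Mq :: "('q \<Rightarrow> nat) \<Rightarrow> ('q \<Rightarrow> 's \<Rightarrow> 'p list \<Rightarrow> ('d,'q) rlab rtree) \<Rightarrow> ('s \<Rightarrow> 'p list \<Rightarrow> 'p)
                  \<Rightarrow> 'q \<Rightarrow> 's rtree \<Rightarrow> ('d,'q,'p) olab rtree" where
  "Mq rkQ R h q s = Mhat rkQ R h (map_rtree Inl s) q"

definition TSig :: "'s set \<Rightarrow> ('s \<Rightarrow> nat) \<Rightarrow> 's rtree set" where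
  "TSig Sig rkS = {s. wf_tree Sig rkS s}"

definition TSigP :: "'s set \<Rightarrow> ('s \<Rightarrow> nat) \<Rightarrow> 'p set \<Rightarrow> ('s + 'p) rtree set" where
  "TSigP Sig rkS P = {s. wf_tree (Inl ` Sig \<union> Inr ` P) (case_sum rkS (\<lambda>_. 0)) s}"

definition Lp :: "'s set \<Rightarrow> ('s \<Rightarrow> nat) \<Rightarrow> ('s \<Rightarrow> 'p list \<Rightarrow> 'p) \<Rightarrow> 'p \<Rightarrow> 's rtree set" where
  "Lp Sig rkS h p = {s \<in> TSig Sig rkS. run h (map_rtree Inl s) = p}"

definition reachable ::
  "'s set \<Rightarrow> ('s \<Rightarrow> nat) \<Rightarrow> 'p set \<Rightarrow> ('q \<Rightarrow> nat) \<Rightarrow> 'q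
   \<Rightarrow> ('q \<Rightarrow> 's \<Rightarrow> 'p list \<Rightarrow> ('d,'q) rlab rtree) \<Rightarrow> ('s \<Rightarrow> 'p list \<Rightarrow> 'p) \<Rightarrow> 'q \<Rightarrow> 'p \<Rightarrow> bool" where
  "reachable Sig rkS P rkQ q0 R h q p \<longleftrightarrow>
     (\<exists>s \<in> TSigP Sig rkS P. OS q p \<in> set_rtree (Mhat rkQ R h s q0))"

text \<open>floor(s)_y: replace every maximal subtree not containing y by the new symbol dollar (None).\<close>
fun cut :: "'a \<Rightarrow> 'a rtree \<Rightarrow> 'a option rtree" where
  "cut y (Node a ts) = (if y \<in> set_rtree (Node a ts) then Node (Some a) (map (cut y) ts) else Node None [])"

definition depth_proper ::
  "'q set \<Rightarrow> ('q \<Rightarrow> nat) \<Rightarrow> 'p set \<Rightarrow> 's set \<Rightarrow> ('s \<Rightarrow> nat)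
   \<Rightarrow> 'q \<Rightarrow> ('q \<Rightarrow> 's \<Rightarrow> 'p list \<Rightarrow> ('d,'q) rlab rtree) \<Rightarrow> ('s \<Rightarrow> 'p list \<Rightarrow> 'p) \<Rightarrow> bool" where
  "depth_proper Q rkQ P Sig rkS q0 R h \<longleftrightarrow>
     (\<forall>q\<in>Q. \<forall>p\<in>P. reachable Sig rkS P rkQ q0 R h q p \<longrightarrow>
        (\<forall>j < rkQ q. infinite ((\<lambda>s. cut (OY j) (Mq rkQ R h q s)) ` Lp Sig rkS h p)))"

definition is_OS :: "('d,'q,'p) olab \<Rightarrow> bool" where
  "is_OS a \<longleftrightarrow> (\<exists>q p. a = OS q p)"

definition finite_ML_nesting ::
  "('q \<Rightarrow> nat) \<Rightarrow> 'p set \<Rightarrow> 's set \<Rightarrow> ('s \<Rightarrow> nat)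
   \<Rightarrow> 'q \<Rightarrow> ('q \<Rightarrow> 's \<Rightarrow> 'p list \<Rightarrow> ('d,'q) rlab rtree) \<Rightarrow> ('s \<Rightarrow> 'p list \<Rightarrow> 'p) \<Rightarrow> bool" where
  "finite_ML_nesting rkQ P Sig rkS q0 R h \<longleftrightarrow>
     (\<exists>b::nat. \<forall>t \<in> TSigP Sig rkS P. \<forall>\<pi> \<in> paths (Mhat rkQ R h t q0).
        length (filter is_OS \<pi>) \<le> b)"

definition LHI ::
  "('q \<Rightarrow> nat) \<Rightarrow> 's set \<Rightarrow> ('s \<Rightarrow> nat)
   \<Rightarrow> 'q \<Rightarrow> ('q \<Rightarrow> 's \<Rightarrow> 'p list \<Rightarrow> ('d,'q) rlab rtree) \<Rightarrow> ('s \<Rightarrow> 'p list \<Rightarrow> 'p) \<Rightarrow> bool" where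
  "LHI rkQ Sig rkS q0 R h \<longleftrightarrow>
     (\<exists>b::nat. \<forall>t \<in> TSig Sig rkS. height (Mq rkQ R h q0 t) \<le> b * height t)"

end

theory Submission
  imports Defs
begin


fun lmax :: "nat list \<Rightarrow> nat" where
  "lmax [] = 0" | "lmax (x#xs) = max x (lmax xs)"

lemma lmax_ge: "x \<in> set xs \<Longrightarrow> x \<le> lmax xs"
  by (induction xs) auto
lemma lmax_le: "(\<And>x. x\<in>set xs \<Longrightarrow> x \<le> B) \<Longrightarrow> lmax xs \<le> B"
  by (induction xs) auto
lemma lmax_mono: "(\<And>x. x\<in>set xs \<Longrightarrow> f x \<le> g x) \<Longrightarrow> lmax (map f xs) \<le> lmax (map g xs)"
  by (induction xs) (force simp: le_max_iff_disj)+
lemma lmax_add: "lmax (map (\<lambda>x. f x + g x) xs) \<le> lmax (map f xs) + lmax (map g xs)"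
  by (induction xs) auto
lemma lmax_ex: "xs \<noteq> [] \<Longrightarrow> \<exists>x\<in>set xs. lmax (map f xs) = f x"
proof (induction xs)
  case (Cons a xs) then show ?case by (cases "xs = []") (auto simp: max_def)
qed simp
lemma Max_lmax: "Max (insert 0 (set xs)) = lmax xs"
  by (induction xs) (auto simp: insert_commute)

lemma height_eq: "height (Node a ts) = Suc (lmax (map height ts))"
  using Max_lmax[of "map height ts"] by simp
declare height.simps[simp del]

lemma height_map: "height (map_rtree F u) = height u"
proof (induction u)
  case (Node a ts) then show ?case
    by (simp add: height_eq o_def cong: map_cong)
qed

fun nos :: "('d,'q,'x) olab rtree \<Rightarrow> nat" where
  "nos (Node a ts) = (if is_OS a then 0 else 1) + lmax (map nos ts)"
fun osk :: "('d,'q,'x) olab rtree \<Rightarrow> nat" where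
  "osk (Node a ts) = (if is_OS a then 1 else 0) + lmax (map osk ts)"
fun wt :: "nat \<Rightarrow> ('d,'q,'x) olab rtree \<Rightarrow> nat" where
  "wt c (Node a ts) = (if is_OS a then c else 1) + lmax (map (wt c) ts)"

lemma wt_le: "wt c u \<le> nos u + c * osk u"
proof (induction u)
  case (Node a ts)
  have "lmax (map (wt c) ts) \<le> lmax (map (\<lambda>t. nos t + c * osk t) ts)"
    using Node by (intro lmax_mono) auto
  also have "\<dots> \<le> lmax (map nos ts) + lmax (map (\<lambda>t. c * osk t) ts)" by (rule lmax_add)
  also have "lmax (map (\<lambda>t. c * osk t) ts) \<le> c * lmax (map osk ts)"
    by (rule lmax_le) (auto intro!: mult_le_mono2 lmax_ge)
  finally show ?case by (auto simp: algebra_simps)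
qed

lemma height_le: "height u \<le> nos u + osk u"
proof (induction u)
  case (Node a ts)
  have "lmax (map height ts) \<le> lmax (map (\<lambda>t. nos t + osk t) ts)"
    using Node by (intro lmax_mono) auto
  also have "\<dots> \<le> lmax (map nos ts) + lmax (map osk ts)" by (rule lmax_add)
  finally show ?case by (auto simp: height_eq)
qed

lemma osk_path: "\<exists>\<pi>\<in>paths u. length (filter is_OS \<pi>) = osk u"
proof (induction u)
  case (Node a ts)
  show ?case
  proof (cases "ts = []")
    case True then show ?thesis by auto
  next
    case False
    then obtain t where t: "t \<in> set ts" "lmax (map osk ts) = osk t" using lmax_ex by blast
    then obtain \<pi> where "\<pi> \<in> paths t" "length (filter is_OS \<pi>) = osk t" using Node by blast
    then show ?thesis using False t by (intro bexI[of _ "a#\<pi>"]) auto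
  qed
qed

lemma osk_bound: "(\<forall>\<pi>\<in>paths u. length (filter is_OS \<pi>) \<le> b) \<Longrightarrow> osk u \<le> b"
  using osk_path by fastforce

fun rel :: "('x \<Rightarrow> 'y) \<Rightarrow> ('d,'q,'x) olab \<Rightarrow> ('d,'q,'y) olab" where
  "rel g (OD d) = OD d" | "rel g (OS q x) = OS q (g x)" | "rel g (OY j) = OY j"

lemma isOS_rel[simp]: "is_OS (rel g a) = is_OS a"
  by (cases a) (auto simp: is_OS_def)

lemma osk_rel: "osk (map_rtree (rel g) u) = osk u"
proof (induction u)
  case (Node a ts) then show ?case by (simp add: o_def cong: map_cong)
qed



fun goodt :: "'q set \<Rightarrow> 'x set \<Rightarrow> ('q \<Rightarrow> nat) \<Rightarrow> nat \<Rightarrow> ('d,'q,'x) olab rtree \<Rightarrow> bool" where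
  "goodt Q X rk m (Node (OY j) ts) = (j < m \<and> ts = [])"
| "goodt Q X rk m (Node (OS q x) ts) = (q \<in> Q \<and> x \<in> X \<and> length ts = rk q \<and> (\<forall>t\<in>set ts. goodt Q X rk m t))"
| "goodt Q X rk m (Node (OD d) ts) = (\<forall>t\<in>set ts. goodt Q X rk m t)"

fun sube :: "('q \<Rightarrow> 'x \<Rightarrow> ('d,'q,'x) olab rtree) \<Rightarrow> ('d,'q,'x) olab rtree \<Rightarrow> ('d,'q,'x) olab rtree" where
  "sube B (Node (OS q x) ts) = subst (B q x) (map (sube B) ts)"
| "sube B (Node (OD d) ts) = Node (OD d) (map (sube B) ts)"
| "sube B (Node (OY j) ts) = Node (OY j) (map (sube B) ts)"

definition params :: "nat \<Rightarrow> ('d,'q,'x) olab rtree list" where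
  "params m = map (\<lambda>j. Node (OY j) []) [0..<m]"

lemma subst_params: "goodt Q X rk m u \<Longrightarrow> subst u (params m) = u"
proof (induction u)
  case (Node a ts) then show ?case
    by (cases a) (auto simp: params_def intro: map_idI)
qed

lemma subst_subst: "goodt Q X rk (length vs) u \<Longrightarrow>
   subst (subst u vs) us = subst u (map (\<lambda>v. subst v us) vs)"
proof (induction u)
  case (Node a ts) then show ?case
    by (cases a) auto
qed

lemma goodt_subst: "goodt Q X rk m u \<Longrightarrow> length us = m \<Longrightarrow> (\<forall>v\<in>set us. goodt Q X rk m' v)
   \<Longrightarrow> goodt Q X rk m' (subst u us)"
proof (induction u)
  case (Node a ts) then show ?case
    by (cases a) auto
qed

lemma sube_subst: "goodt Q X rk (length us) u \<Longrightarrow>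
   (\<forall>q\<in>Q. \<forall>x\<in>X. goodt Q X rk (rk q) (B q x)) \<Longrightarrow>
   sube B (subst u us) = subst (sube B u) (map (sube B) us)"
proof (induction u)
  case (Node a ts)
  show ?case
  proof (cases a)
    case (OD d) then show ?thesis using Node by auto
  next
    case (OY j) then show ?thesis using Node by auto
  next
    case (OS q x)
    then have g: "goodt Q X rk (length (map (sube B) ts)) (B q x)" using Node by auto
    have "sube B (subst (Node a ts) us) = subst (B q x) (map (\<lambda>t. subst (sube B t) (map (sube B) us)) ts)"
      using Node OS by (auto cong: map_cong)
    also have "\<dots> = subst (subst (B q x) (map (sube B) ts)) (map (sube B) us)"
      using subst_subst[OF g] by (simp add: o_def)
    finally show ?thesis using OS by simp
  qed
qed

lemma nos_subst: "nos (subst v us) \<le> nos v + lmax (map nos us)"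
proof (induction v)
  case (Node a ts)
  have A: "lmax (map (\<lambda>t. nos (subst t us)) ts) \<le> lmax (map nos ts) + lmax (map nos us)"
  proof -
    have "lmax (map (\<lambda>t. nos (subst t us)) ts) \<le> lmax (map (\<lambda>t. nos t + lmax (map nos us)) ts)"
      using Node by (intro lmax_mono) auto
    also have "\<dots> \<le> lmax (map nos ts) + lmax (map (\<lambda>t. lmax (map nos us)) ts)" by (rule lmax_add)
    also have "lmax (map (\<lambda>t. lmax (map nos us)) ts) \<le> lmax (map nos us)" by (rule lmax_le) auto
    finally show ?thesis by simp
  qed
  show ?case
  proof (cases a)
    case (OY j)
    show ?thesis
    proof (cases "j < length us")
      case True
      then have "nos (us ! j) \<le> lmax (map nos us)" by (intro lmax_ge) auto
      then show ?thesis using OY True by (simp add: is_OS_def)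
    next
      case False then show ?thesis using OY A by (simp add: o_def is_OS_def)
    qed
  qed (use A in \<open>auto simp: o_def is_OS_def\<close>)
qed

lemma nos_sube: "goodt Q X rk m u \<Longrightarrow> (\<forall>q\<in>Q. \<forall>x\<in>X. nos (B q x) \<le> c) \<Longrightarrow> nos (sube B u) \<le> wt c u"
proof (induction u)
  case (Node a ts)
  have A: "lmax (map (nos \<circ> sube B) ts) \<le> lmax (map (wt c) ts)"
    using Node by (intro lmax_mono) (cases a; auto)
  show ?case
  proof (cases a)
    case (OS q x)
    then have "nos (B q x) \<le> c" using Node by auto
    then show ?thesis using OS A nos_subst[of "B q x" "map (sube B) ts"]
      by (auto simp: is_OS_def)
  qed (use A in \<open>auto simp: is_OS_def\<close>)
qed

lemma inst_cong: "wf_rhs Q rkQ D rkD k m r \<Longrightarrow> (\<And>q i. q \<in> Q \<Longrightarrow> i < k \<Longrightarrow> f q i = f' q i)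
  \<Longrightarrow> inst r f = inst r f'"
proof (induction r)
  case (Node a ts)
  have M: "map (\<lambda>t. inst t f) ts = map (\<lambda>t. inst t f') ts"
    using Node by (cases a) (auto intro!: map_cong)
  show ?case
  proof (cases a)
    case (RC q i)
    then have "f q i = f' q i" using Node.prems by auto
    then show ?thesis using RC by (simp only: inst.simps M)
  qed (simp_all only: inst.simps M)
qed

lemma goodt_inst: "wf_rhs Q rkQ D rkD k m r \<Longrightarrow> (\<And>q i. q \<in> Q \<Longrightarrow> i < k \<Longrightarrow> goodt Q X rkQ (rkQ q) (f q i))
  \<Longrightarrow> goodt Q X rkQ m (inst r f)"
proof (induction r)
  case (Node a ts)
  show ?case
  proof (cases a)
    case (RC q i)
    then show ?thesis using Node by (auto intro!: goodt_subst)
  qed (use Node in auto)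
qed

lemma sube_inst: "wf_rhs Q rkQ D rkD k m r \<Longrightarrow> (\<And>q i. q \<in> Q \<Longrightarrow> i < k \<Longrightarrow> goodt Q X rkQ (rkQ q) (f q i))
  \<Longrightarrow> (\<forall>q\<in>Q. \<forall>x\<in>X. goodt Q X rkQ (rkQ q) (B q x))
  \<Longrightarrow> sube B (inst r f) = inst r (\<lambda>q i. sube B (f q i))"
proof (induction r)
  case (Node a ts)
  have M: "map (sube B) (map (\<lambda>t. inst t f) ts) = map (\<lambda>t. inst t (\<lambda>q i. sube B (f q i))) ts"
    using Node by (cases a) (auto intro!: map_cong)
  show ?case
  proof (cases a)
    case (RC q i)
    then have g: "goodt Q X rkQ (length (map (\<lambda>t. inst t f) ts)) (f q i)" using Node by auto
    show ?thesis using RC sube_subst[OF g Node(4)] by (simp only: inst.simps M)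
  qed (simp_all only: inst.simps sube.simps M list.map(1))
qed

lemma nos_inst: "wf_rhs Q rkQ D rkD k m r \<Longrightarrow> (\<And>q i. q \<in> Q \<Longrightarrow> i < k \<Longrightarrow> nos (f q i) \<le> 1)
  \<Longrightarrow> nos (inst r f) \<le> height r"
proof (induction r)
  case (Node a ts)
  have A: "lmax (map (\<lambda>t. nos (inst t f)) ts) \<le> lmax (map height ts)"
    using Node by (intro lmax_mono) (cases a; auto)
  show ?case
  proof (cases a)
    case (RC q i)
    then have "nos (f q i) \<le> 1" using Node by auto
    then show ?thesis using RC A nos_subst[of "f q i" "map (\<lambda>t. inst t f) ts"]
      by (simp add: height_eq o_def)
  qed (use A in \<open>auto simp: height_eq o_def is_OS_def\<close>)
qed

lemma rel_subst: "map_rtree (rel g) (subst u us) = subst (map_rtree (rel g) u) (map (map_rtree (rel g)) us)"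
proof (induction u)
  case (Node a ts) then show ?case by (cases a) (auto simp: o_def)
qed

lemma rel_inst: "map_rtree (rel g) (inst r f) = inst r (\<lambda>q i. map_rtree (rel g) (f q i))"
proof (induction r)
  case (Node a ts)
  have M: "map (map_rtree (rel g)) (map (\<lambda>t. inst t f) ts) = map (\<lambda>t. inst t (\<lambda>q i. map_rtree (rel g) (f q i))) ts"
    using Node by (auto intro!: map_cong)
  show ?case by (cases a) (simp_all only: inst.simps rel_subst M rtree.map rel.simps list.map(1))
qed



definition gT :: "('s \<Rightarrow> 'p list \<Rightarrow> 'p) \<Rightarrow> 's rtree \<Rightarrow> 'p" where
  "gT h s = run h (map_rtree Inl s)"
definition hT :: "'s \<Rightarrow> 's rtree list \<Rightarrow> 's rtree" where
  "hT \<sigma> ss = Node \<sigma> ss"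
definition RT :: "('q \<Rightarrow> 's \<Rightarrow> 'p list \<Rightarrow> ('d,'q) rlab rtree) \<Rightarrow> ('s \<Rightarrow> 'p list \<Rightarrow> 'p)
   \<Rightarrow> 'q \<Rightarrow> 's \<Rightarrow> 's rtree list \<Rightarrow> ('d,'q) rlab rtree" where
  "RT R h q \<sigma> ss = R q \<sigma> (map (gT h) ss)"

fun cut1 :: "'s rtree \<Rightarrow> ('s + 's rtree) rtree" where
  "cut1 (Node \<sigma> cs) = Node (Inl \<sigma>) (map (\<lambda>c. Node (Inr c) []) cs)"

fun expand :: "('s + 's rtree) rtree \<Rightarrow> ('s + 's rtree) rtree" where
  "expand (Node (Inl \<sigma>) ts) = Node (Inl \<sigma>) (map expand ts)"
| "expand (Node (Inr s) ts) = cut1 s"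

fun cutd :: "nat \<Rightarrow> 's rtree \<Rightarrow> ('s + 's rtree) rtree" where
  "cutd 0 s = Node (Inr s) []"
| "cutd (Suc d) (Node \<sigma> ts) = Node (Inl \<sigma>) (map (cutd d) ts)"

definition wfI :: "'s set \<Rightarrow> ('s \<Rightarrow> nat) \<Rightarrow> ('s + 's rtree) rtree \<Rightarrow> bool" where
  "wfI Sig rkS t = wf_tree (Inl ` Sig \<union> Inr ` TSig Sig rkS) (case_sum rkS (\<lambda>_. 0)) t"

lemma Mhat_Inl: "Mhat rkQ R h (Node (Inl \<sigma>) ts) q = inst (R q \<sigma> (map (run h) ts)) (\<lambda>q' i. (map (Mhat rkQ R h) ts ! i) q')"
  by (simp add: Let_def)

lemma Mhat_Inr: "Mhat rkQ R h (Node (Inr p) ts) q = Node (OS q p) (params (rkQ q))"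
  by (simp add: params_def)

declare Mhat.simps[simp del]

lemma wfI_Inl: "wfI Sig rkS (Node (Inl \<sigma>) ts) = (\<sigma> \<in> Sig \<and> length ts = rkS \<sigma> \<and> (\<forall>t\<in>set ts. wfI Sig rkS t))"
  by (auto simp: wfI_def)
lemma wfI_Inr: "wfI Sig rkS (Node (Inr s) ts) = (s \<in> TSig Sig rkS \<and> ts = [])"
  by (auto simp: wfI_def)

lemma run_hT_expand: "run hT (expand t) = run hT t"
proof (induction t)
  case (Node a ts)
  show ?case
  proof (cases a)
    case (Inl \<sigma>) then show ?thesis using Node by (simp add: hT_def cong: map_cong)
  next
    case (Inr s) then show ?thesis by (cases s) (simp add: hT_def o_def)
  qed
qed

lemma run_hT_TSig: "wfI Sig rkS t \<Longrightarrow> run hT t \<in> TSig Sig rkS"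
proof (induction t)
  case (Node a ts)
  show ?case
  proof (cases a)
    case (Inl \<sigma>) then show ?thesis using Node by (auto simp: hT_def TSig_def wfI_Inl)
  next
    case (Inr s) then show ?thesis using Node by (auto simp: wfI_Inr)
  qed
qed

lemma cut1_wf: "s \<in> TSig Sig rkS \<Longrightarrow> wfI Sig rkS (cut1 s)"
  by (cases s) (auto simp: wfI_Inl wfI_Inr TSig_def)

lemma expand_wf: "wfI Sig rkS t \<Longrightarrow> wfI Sig rkS (expand t)"
proof (induction t)
  case (Node a ts)
  show ?case
  proof (cases a)
    case (Inl \<sigma>) then show ?thesis using Node by (auto simp: wfI_Inl)
  next
    case (Inr s) then show ?thesis using Node cut1_wf by (auto simp: wfI_Inr)
  qed
qed

lemma expand_cutd: "expand (cutd d t) = cutd (Suc d) t"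
proof (induction d arbitrary: t)
  case 0 then show ?case by (cases t) simp
next
  case (Suc d) then show ?case by (cases t) simp
qed

lemma cutd_wf: "t \<in> TSig Sig rkS \<Longrightarrow> wfI Sig rkS (cutd d t)"
proof (induction d arbitrary: t)
  case 0 then show ?case by (simp add: wfI_Inr)
next
  case (Suc d) then show ?case by (cases t) (auto simp: wfI_Inl TSig_def)
qed

lemma cutd_full: "height t \<le> d \<Longrightarrow> cutd d t = map_rtree Inl t"
proof (induction t arbitrary: d)
  case (Node \<sigma> ts)
  then obtain d' where d: "d = Suc d'" by (cases d) (auto simp: height_eq)
  have "\<And>t. t \<in> set ts \<Longrightarrow> height t \<le> d'"
  proof -
    fix t assume t: "t \<in> set ts"
    have "height t \<le> lmax (map height ts)" by (rule lmax_ge) (use t in auto)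
    then show "height t \<le> d'" using Node.prems d by (auto simp: height_eq)
  qed
  then show ?case using Node d by auto
qed

lemma run_TSig: "is_mttr Q rkQ P Sig rkS D rkD q0 R h \<Longrightarrow> s \<in> TSig Sig rkS \<Longrightarrow> gT h s \<in> P"
proof (induction s)
  case (Node \<sigma> cs)
  have "\<forall>c\<in>set cs. gT h c \<in> P" using Node by (auto simp: TSig_def)
  then have "set (map (gT h) cs) \<subseteq> P" by auto
  moreover have "\<sigma> \<in> Sig" "length (map (gT h) cs) = rkS \<sigma>" using Node.prems by (auto simp: TSig_def)
  ultimately have "h \<sigma> (map (gT h) cs) \<in> P" using Node.prems(1) unfolding is_mttr_def by blast
  then show ?case unfolding gT_def by (simp add: o_def)
qed

lemma run_rel: "run h (map_rtree (map_sum id (gT h)) t) = gT h (run hT t)"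
proof (induction t)
  case (Node a ts)
  show ?case
  proof (cases a)
    case (Inl \<sigma>) then show ?thesis using Node by (simp add: hT_def gT_def o_def cong: map_cong)
  qed simp
qed

lemma rhs_wf: "is_mttr Q rkQ P Sig rkS D rkD q0 R h \<Longrightarrow> q \<in> Q \<Longrightarrow> wfI Sig rkS (Node (Inl \<sigma>) ts) \<Longrightarrow>
   wf_rhs Q rkQ D rkD (length ts) (rkQ q) (RT R h q \<sigma> (map (run hT) ts))"
proof -
  assume M: "is_mttr Q rkQ P Sig rkS D rkD q0 R h" and q: "q \<in> Q" and w: "wfI Sig rkS (Node (Inl \<sigma>) ts)"
  have "set (map (gT h) (map (run hT) ts)) \<subseteq> P"
    using w by (auto simp: wfI_Inl intro!: run_TSig[OF M] run_hT_TSig)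
  then show ?thesis using M q w unfolding is_mttr_def RT_def by (auto simp: wfI_Inl)
qed

lemma good_Mhat: "is_mttr Q rkQ P Sig rkS D rkD q0 R h \<Longrightarrow> wfI Sig rkS t \<Longrightarrow> q \<in> Q \<Longrightarrow>
   goodt Q (TSig Sig rkS) rkQ (rkQ q) (Mhat rkQ (RT R h) hT t q)"
proof (induction t arbitrary: q)
  case (Node a ts)
  show ?case
  proof (cases a)
    case (Inl \<sigma>)
    show ?thesis unfolding Inl Mhat_Inl
    proof (rule goodt_inst[OF rhs_wf[OF Node.prems(1) Node.prems(3)]])
      show "wfI Sig rkS (Node (Inl \<sigma>) ts)" using Node Inl by simp
      fix q' i assume "q' \<in> Q" "i < length ts"
      then show "goodt Q (TSig Sig rkS) rkQ (rkQ q') ((map (Mhat rkQ (RT R h) hT) ts ! i) q')"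
        using Node Inl by (auto simp: wfI_Inl)
    qed
  next
    case (Inr s) then show ?thesis using Node by (auto simp: Mhat_Inr params_def wfI_Inr)
  qed
qed

lemma Mhat_expand: "is_mttr Q rkQ P Sig rkS D rkD q0 R h \<Longrightarrow> wfI Sig rkS t \<Longrightarrow> q \<in> Q \<Longrightarrow>
   Mhat rkQ (RT R h) hT (expand t) q = sube (\<lambda>q s. Mhat rkQ (RT R h) hT (cut1 s) q) (Mhat rkQ (RT R h) hT t q)"
proof (induction t arbitrary: q)
  case (Node a ts)
  let ?B = "\<lambda>q s. Mhat rkQ (RT R h) hT (cut1 s) q"
  have Bg: "\<forall>q\<in>Q. \<forall>x\<in>TSig Sig rkS. goodt Q (TSig Sig rkS) rkQ (rkQ q) (?B q x)"
    using good_Mhat[OF Node.prems(1) cut1_wf] by blast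
  show ?case
  proof (cases a)
    case (Inl \<sigma>)
    have w: "wfI Sig rkS (Node (Inl \<sigma>) ts)" using Node Inl by simp
    have rw: "wf_rhs Q rkQ D rkD (length ts) (rkQ q) (RT R h q \<sigma> (map (run hT) ts))"
      by (rule rhs_wf[OF Node.prems(1) Node.prems(3) w])
    have "Mhat rkQ (RT R h) hT (expand (Node a ts)) q
       = inst (RT R h q \<sigma> (map (run hT) ts)) (\<lambda>q' i. (map (Mhat rkQ (RT R h) hT) (map expand ts) ! i) q')"
      using Inl by (simp add: Mhat_Inl run_hT_expand o_def)
    also have "\<dots> = inst (RT R h q \<sigma> (map (run hT) ts)) (\<lambda>q' i. sube ?B ((map (Mhat rkQ (RT R h) hT) ts ! i) q'))"
    proof (rule inst_cong[OF rw])
      fix q' i assume "q' \<in> Q" "i < length ts"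
      then show "(map (Mhat rkQ (RT R h) hT) (map expand ts) ! i) q' = sube ?B ((map (Mhat rkQ (RT R h) hT) ts ! i) q')"
        using Node w by (auto simp: wfI_Inl)
    qed
    also have "\<dots> = sube ?B (inst (RT R h q \<sigma> (map (run hT) ts)) (\<lambda>q' i. (map (Mhat rkQ (RT R h) hT) ts ! i) q'))"
    proof (rule sube_inst[OF rw _ Bg, symmetric])
      fix q' i assume "q' \<in> Q" "i < length ts"
      then show "goodt Q (TSig Sig rkS) rkQ (rkQ q') ((map (Mhat rkQ (RT R h) hT) ts ! i) q')"
        using good_Mhat[OF Node.prems(1)] w by (auto simp: wfI_Inl)
    qed
    finally show ?thesis using Inl by (simp add: Mhat_Inl)
  next
    case (Inr s)
    then have s: "s \<in> TSig Sig rkS" using Node by (simp add: wfI_Inr)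
    have "sube ?B (Node (OS q s) (params (rkQ q))) = subst (?B q s) (params (rkQ q))"
      by (simp add: params_def o_def)
    also have "\<dots> = ?B q s" using Bg s Node.prems(3) by (auto intro: subst_params)
    finally show ?thesis using Inr by (simp add: Mhat_Inr)
  qed
qed

lemma Mhat_rel: "is_mttr Q rkQ P Sig rkS D rkD q0 R h \<Longrightarrow> wfI Sig rkS t \<Longrightarrow> q \<in> Q \<Longrightarrow>
   Mhat rkQ R h (map_rtree (map_sum id (gT h)) t) q = map_rtree (rel (gT h)) (Mhat rkQ (RT R h) hT t q)"
proof (induction t arbitrary: q)
  case (Node a ts)
  show ?case
  proof (cases a)
    case (Inl \<sigma>)
    have w: "wfI Sig rkS (Node (Inl \<sigma>) ts)" using Node Inl by simp
    have rw: "wf_rhs Q rkQ D rkD (length ts) (rkQ q) (RT R h q \<sigma> (map (run hT) ts))"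
      by (rule rhs_wf[OF Node.prems(1) Node.prems(3) w])
    have "Mhat rkQ R h (map_rtree (map_sum id (gT h)) (Node a ts)) q
      = inst (RT R h q \<sigma> (map (run hT) ts)) (\<lambda>q' i. (map (Mhat rkQ R h) (map (map_rtree (map_sum id (gT h))) ts) ! i) q')"
      using Inl by (simp add: Mhat_Inl RT_def run_rel o_def)
    also have "\<dots> = inst (RT R h q \<sigma> (map (run hT) ts)) (\<lambda>q' i. map_rtree (rel (gT h)) ((map (Mhat rkQ (RT R h) hT) ts ! i) q'))"
    proof (rule inst_cong[OF rw])
      fix q' i assume "q' \<in> Q" "i < length ts"
      then show "(map (Mhat rkQ R h) (map (map_rtree (map_sum id (gT h))) ts) ! i) q' = map_rtree (rel (gT h)) ((map (Mhat rkQ (RT R h) hT) ts ! i) q')"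
        using Node w by (auto simp: wfI_Inl id_def)
    qed
    finally have X: "Mhat rkQ R h (map_rtree (map_sum id (gT h)) (Node a ts)) q =
      inst (RT R h q \<sigma> (map (run hT) ts)) (\<lambda>q' i. map_rtree (rel (gT h)) ((map (Mhat rkQ (RT R h) hT) ts ! i) q'))" .
    show ?thesis unfolding X using Inl by (simp add: Mhat_Inl rel_inst)
  next
    case (Inr s)
    then show ?thesis by (simp add: Mhat_Inr params_def)
  qed
qed

lemma rel_TSigP: "is_mttr Q rkQ P Sig rkS D rkD q0 R h \<Longrightarrow> wfI Sig rkS t \<Longrightarrow>
   map_rtree (map_sum id (gT h)) t \<in> TSigP Sig rkS P"
proof (induction t)
  case (Node a ts)
  show ?case
  proof (cases a)
    case (Inl \<sigma>) then show ?thesis using Node by (auto simp: wfI_Inl TSigP_def)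
  next
    case (Inr s) then show ?thesis using Node run_TSig[OF Node.prems(1)] by (auto simp: wfI_Inr TSigP_def)
  qed
qed

lemma lmax_nos_params: "lmax (map nos (params m)) \<le> 1"
  by (rule lmax_le) (auto simp: params_def is_OS_def lmax_le)

lemma nos_B: "is_mttr Q rkQ P Sig rkS D rkD q0 R h \<Longrightarrow> s \<in> TSig Sig rkS \<Longrightarrow> q \<in> Q \<Longrightarrow>
   nos (Mhat rkQ (RT R h) hT (cut1 s) q) \<le> height (RT R h q (case s of Node \<sigma> cs \<Rightarrow> \<sigma>) (case s of Node \<sigma> cs \<Rightarrow> cs))"
proof -
  assume M: "is_mttr Q rkQ P Sig rkS D rkD q0 R h" and s: "s \<in> TSig Sig rkS" and q: "q \<in> Q"
  obtain \<sigma> cs where sd: "s = Node \<sigma> cs" by (cases s)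
  let ?ts = "map (\<lambda>c. Node (Inr c) []) cs"
  have w: "wfI Sig rkS (Node (Inl \<sigma>) ?ts)" using cut1_wf[OF s] sd by simp
  have rw: "wf_rhs Q rkQ D rkD (length ?ts) (rkQ q) (RT R h q \<sigma> (map (run hT) ?ts))"
    using rhs_wf[OF M q w] by simp
  have "nos (inst (RT R h q \<sigma> (map (run hT) ?ts)) (\<lambda>q' i. (map (Mhat rkQ (RT R h) hT) ?ts ! i) q'))
        \<le> height (RT R h q \<sigma> (map (run hT) ?ts))"
  proof (rule nos_inst[OF rw])
    fix q' i assume "q' \<in> Q" "i < length ?ts"
    moreover note lmax_nos_params
    ultimately show "nos ((map (Mhat rkQ (RT R h) hT) ?ts ! i) q') \<le> 1"
      by (simp add: Mhat_Inr is_OS_def)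
  qed
  moreover have "map (run hT) ?ts = cs" by (simp add: o_def)
  ultimately show ?thesis using sd by (simp add: Mhat_Inl)
qed



theorem mainTheorem10:
  fixes Q :: "'q set" and rkQ :: "'q \<Rightarrow> nat" and P :: "'p set"
    and Sig :: "'s set" and rkS :: "'s \<Rightarrow> nat" and D :: "'d set" and rkD :: "'d \<Rightarrow> nat"
    and q0 :: 'q and R :: "'q \<Rightarrow> 's \<Rightarrow> 'p list \<Rightarrow> ('d,'q) rlab rtree"
    and h :: "'s \<Rightarrow> 'p list \<Rightarrow> 'p"
  assumes "is_mttr Q rkQ P Sig rkS D rkD q0 R h"
    and "depth_proper Q rkQ P Sig rkS q0 R h"
    and "finite_ML_nesting rkQ P Sig rkS q0 R h"
  shows "LHI rkQ Sig rkS q0 R h"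
proof -
  note M = assms(1)
  have fin: "finite Q" "finite P" "finite Sig" and q0: "q0 \<in> Q" "rkQ q0 = 0"
    using M unfolding is_mttr_def by auto
  obtain b where b: "\<forall>t \<in> TSigP Sig rkS P. \<forall>\<pi> \<in> paths (Mhat rkQ R h t q0). length (filter is_OS \<pi>) \<le> b"
    using assms(3) unfolding finite_ML_nesting_def by blast
  define S where "S = {(q,\<sigma>,ps). q \<in> Q \<and> \<sigma> \<in> Sig \<and> set ps \<subseteq> P \<and> length ps = rkS \<sigma>}"
  have "S \<subseteq> Q \<times> Sig \<times> (\<Union>\<sigma>\<in>Sig. {ps. set ps \<subseteq> P \<and> length ps = rkS \<sigma>})"
    unfolding S_def by auto
  moreover have "finite (Q \<times> Sig \<times> (\<Union>\<sigma>\<in>Sig. {ps. set ps \<subseteq> P \<and> length ps = rkS \<sigma>}))"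
    using fin by (auto intro!: finite_lists_length_eq)
  ultimately have "finite S" by (rule finite_subset)
  then have "finite ((\<lambda>(q,\<sigma>,ps). height (R q \<sigma> ps)) ` S)" by simp
  then obtain c where c: "\<forall>x \<in> (\<lambda>(q,\<sigma>,ps). height (R q \<sigma> ps)) ` S. x \<le> c"
    unfolding finite_nat_set_iff_bounded_le by blast
  let ?TS = "TSig Sig rkS"
  let ?B = "\<lambda>q s. Mhat rkQ (RT R h) hT (cut1 s) q"
  have nB: "\<forall>q\<in>Q. \<forall>s\<in>?TS. nos (?B q s) \<le> c"
  proof (intro ballI)
    fix q s assume q: "q \<in> Q" and s: "s \<in> ?TS"
    obtain \<sigma> cs where sd: "s = Node \<sigma> cs" by (cases s)
    have "\<forall>x\<in>set cs. gT h x \<in> P" using s sd run_TSig[OF M] by (auto simp: TSig_def)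
    then have "(q, \<sigma>, map (gT h) cs) \<in> S" using q s sd by (auto simp: S_def TSig_def)
    then have "height (R q \<sigma> (map (gT h) cs)) \<le> c" using c by (metis (no_types, lifting) case_prod_conv image_eqI)
    then show "nos (?B q s) \<le> c" using nos_B[OF M s q] sd by (simp add: RT_def)
  qed
  show ?thesis unfolding LHI_def
  proof (intro exI[of _ "c*b+b"] ballI)
    fix t assume t: "t \<in> ?TS"
    define u where "u d = Mhat rkQ (RT R h) hT (cutd d t) q0" for d
    have osk: "osk (u d) \<le> b" for d
    proof -
      have "osk (u d) = osk (Mhat rkQ R h (map_rtree (map_sum id (gT h)) (cutd d t)) q0)"
        unfolding u_def Mhat_rel[OF M cutd_wf[OF t] q0(1)] osk_rel ..
      also have "\<dots> \<le> b" by (rule osk_bound, rule bspec[OF b rel_TSigP[OF M cutd_wf[OF t]]])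
      finally show ?thesis .
    qed
    have nos: "nos (u d) \<le> d * (c * b)" for d
    proof (induction d)
      case 0 then show ?case by (simp add: u_def Mhat_Inr q0 params_def is_OS_def)
    next
      case (Suc d)
      have "u (Suc d) = sube ?B (u d)"
        unfolding u_def expand_cutd[symmetric] by (rule Mhat_expand[OF M cutd_wf[OF t] q0(1)])
      then have "nos (u (Suc d)) \<le> wt c (u d)"
        using nos_sube[OF good_Mhat[OF M cutd_wf[OF t] q0(1)] nB] by (simp add: u_def)
      also have "\<dots> \<le> nos (u d) + c * osk (u d)" by (rule wt_le)
      also have "\<dots> \<le> d * (c * b) + c * b" using Suc osk[of d] by (intro add_mono mult_le_mono2) auto
      finally show ?case by simp
    qed
    let ?n = "height t"
    have "Mq rkQ R h q0 t = Mhat rkQ R h (map_rtree (map_sum id (gT h)) (cutd ?n t)) q0"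
      by (simp add: Mq_def cutd_full rtree.map_comp o_def)
    also have "\<dots> = map_rtree (rel (gT h)) (u ?n)"
      unfolding u_def by (rule Mhat_rel[OF M cutd_wf[OF t] q0(1)])
    finally have "height (Mq rkQ R h q0 t) = height (u ?n)" by (simp add: height_map)
    also have "\<dots> \<le> nos (u ?n) + osk (u ?n)" by (rule height_le)
    also have "\<dots> \<le> ?n * (c * b) + b" using nos osk by (intro add_mono) auto
    also have "\<dots> \<le> (c * b + b) * ?n"
    proof -
      have "?n \<ge> 1" by (cases t) (simp add: height_eq)
      then have "b \<le> b * ?n" by simp
      then show ?thesis by (simp add: algebra_simps)
    qed
    finally show "height (Mq rkQ R h q0 t) \<le> (c * b + b) * height t" .
  qed
qed


end
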